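(* Let $\bar\gamma\in(0,2\pi)$ be fixed and, for each integer $\rho\ge1$, let $\tau_\rho\in(0,\pi)$ be the solution of $$\frac{\tau-\bar\gamma/2}{2\rho-1}-\tan^{-1}\!\Big(\frac{\sin\tau}{2\rho-\cos\tau}\Big)=0,$$ and set $\bar t_\rho=\frac{4\rho\tau_\rho-\bar\gamma}{2\rho-1}$ (this is the minimum transfer time to $(\gamma,0,\gamma)$ with $\gamma=\bar\gamma+2(\rho-1)\pi$, minus $2(\rho-1)\pi$). Then as $\rho\to\infty$, $\tau_\rho\to\tau_\infty$, where $\tau_\infty$ is the solution of $\tau-\sin\tau-\bar\gamma/2=0$, and $\bar t_\rho\to 2\tau_\infty$.
   Context: $\tan^{-1}$ takes values in $(-\pi/2,\pi/2)$. *)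

theory Defs
  imports "HOL-Analysis.Analysis"
begin

end

theory Submission imports Defs "HOL-Real_Asymp.Real_Asymp" begin

lemma sin_lt_self: fixes x :: real assumes "0 < x" shows "sin x < x"
proof (cases "x < 2")
  case True
  have s2: "sin (x/2) > 0" using assms True pi_gt3 by (intro sin_gt_zero) auto
  have s4: "sin (x/4) > 0" using assms True pi_gt3 by (intro sin_gt_zero) auto
  have c: "cos (x/2) < 1" using cos_double_sin[of "x/4"] s4 by simp
  have le: "sin (x/2) \<le> x/2" using sin_x_le_x[of "x/2"] assms by simp
  have "sin x = 2 * sin (x/2) * cos (x/2)" using sin_double[of "x/2"] by simp
  also have "\<dots> < 2 * (x/2) * 1"
  proof -
    have "sin (x/2) * cos (x/2) < sin (x/2) * 1" using s2 c by simp
    also have "\<dots> \<le> x/2" using le by simp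
    finally show ?thesis by simp
  qed
  finally show ?thesis by simp
next
  case False
  then show ?thesis using sin_le_one[of x] by linarith
qed

lemma abs_sin_lt: fixes d :: real assumes "0 < d" shows "\<bar>sin d\<bar> < d"
proof -
  have "- sin d < d"
  proof (cases "d < pi")
    case True then show ?thesis using sin_gt_zero[of d] assms by simp
  next
    case False then show ?thesis using sin_ge_minus_one[of d] pi_gt3 by linarith
  qed
  then show ?thesis using sin_lt_self[OF assms] by simp
qed

lemma f_strict: fixes a b :: real assumes "a < b" shows "a - sin a < b - sin b"
proof -
  have "sin b - sin a = 2 * sin ((b - a) / 2) * cos ((b + a) / 2)" by (rule sin_diff_sin)
  also have "\<dots> \<le> 2 * \<bar>sin ((b - a) / 2)\<bar>"
  proof -
    have "sin ((b - a) / 2) * cos ((b + a) / 2) \<le> \<bar>sin ((b - a) / 2) * cos ((b + a) / 2)\<bar>" by simp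
    also have "\<dots> \<le> \<bar>sin ((b - a) / 2)\<bar> * 1" unfolding abs_mult
      by (intro mult_left_mono) (auto simp: abs_cos_le_one)
    finally show ?thesis by simp
  qed
  also have "\<dots> < 2 * ((b - a) / 2)" using abs_sin_lt[of "(b-a)/2"] assms by simp
  finally show ?thesis by simp
qed

lemma lim1: "(\<lambda>\<rho>::nat. 3 / (2 * real \<rho> - 1)) \<longlonglongrightarrow> 0" by real_asymp
lemma lim2: "(\<lambda>\<rho>::nat. 1 / (2 * real \<rho> - 1)) \<longlonglongrightarrow> 0" by real_asymp
lemma cubic_bound: fixes N x a :: real
  assumes N: "N \<ge> 1" and x: "0 \<le> x" "x \<le> 1/N" and a: "x - x^3/3 \<le> a" "a \<le> x"
  shows "\<bar>N*a - N*x\<bar> \<le> 1/N"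
proof -
  have Nx: "N * x \<le> 1" using x N by (simp add: field_simps)
  have "\<bar>N*a - N*x\<bar> = N * (x - a)" using a N by (simp add: right_diff_distrib)
  also have "\<dots> \<le> N * (x^3/3)" using a N by (intro mult_left_mono) auto
  also have "\<dots> \<le> (N*x) * x^2" using N x by (simp add: power3_eq_cube power2_eq_square)
  also have "\<dots> \<le> 1 * x^2" using Nx x by (intro mult_right_mono) auto
  also have "\<dots> \<le> (1/N)^2" using x by (simp add: power_mono)
  also have "\<dots> \<le> 1/N" using N by (simp add: power2_eq_square field_simps)
  finally show ?thesis .
qed

theorem mainTheorem9:
  fixes gbar :: real and tau :: "nat \<Rightarrow> real" and tau_inf :: real
  assumes gbar: "0 < gbar" "gbar < 2 * pi"
    and tau_range: "\<And>\<rho>. \<rho> \<ge> 1 \<Longrightarrow> 0 < tau \<rho> \<and> tau \<rho> < pi"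
    and tau_eq: "\<And>\<rho>. \<rho> \<ge> 1 \<Longrightarrow>
        (tau \<rho> - gbar / 2) / (2 * real \<rho> - 1)
          - arctan (sin (tau \<rho>) / (2 * real \<rho> - cos (tau \<rho>))) = 0"
    and tau_inf_eq: "tau_inf - sin tau_inf - gbar / 2 = 0"
  shows "tau \<longlonglongrightarrow> tau_inf \<and>
      (\<lambda>\<rho>. (4 * real \<rho> * tau \<rho> - gbar) / (2 * real \<rho> - 1)) \<longlonglongrightarrow> 2 * tau_inf"
proof -
  define e where "e \<rho> = tau \<rho> - sin (tau \<rho>) - gbar / 2" for \<rho>
  have ebound: "\<bar>e \<rho>\<bar> \<le> 3 / (2 * real \<rho> - 1)" if r: "\<rho> \<ge> 2" for \<rho>
  proof -
    define N where "N = 2 * real \<rho> - 1"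
    define D where "D = 2 * real \<rho> - cos (tau \<rho>)"
    define s where "s = sin (tau \<rho>)"
    define x where "x = s / D"
    have N3: "N \<ge> 3" using r by (simp add: N_def)
    have ND: "N \<le> D" unfolding N_def D_def using cos_le_one[of "tau \<rho>"] by linarith
    have Dpos: "D > 0" using N3 ND by linarith
    have s0: "0 < s" unfolding s_def using tau_range[of \<rho>] r by (intro sin_gt_zero) auto
    have s1: "s \<le> 1" unfolding s_def by simp
    have x0: "0 \<le> x" using s0 Dpos by (simp add: x_def)
    have xN: "x \<le> 1/N"
    proof -
      have "x \<le> 1 / D" unfolding x_def using s1 Dpos by (simp add: divide_right_mono)
      also have "\<dots> \<le> 1/N" using ND N3 by (simp add: frac_le)
      finally show ?thesis .
    qed
    have "1/N < 1" using N3 by simp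
    hence x1: "x < 1" using xN by linarith
    have lo: "x - x^3/3 \<le> arctan x"
      using arctan_lower_bound[OF x0 x1, of 1] by (simp add: numeral_eq_Suc)
    have hi: "arctan x \<le> x" using arctan_le_self[OF x0] .
    have cb: "\<bar>N * arctan x - N * x\<bar> \<le> 1/N" using cubic_bound[OF _ x0 xN lo hi] N3 by simp
    have eq: "tau \<rho> - gbar/2 = N * arctan x"
      using tau_eq[of \<rho>] r N3 unfolding N_def x_def s_def D_def by (simp add: field_simps)
    have "N * x - s = s * (N - D) / D" unfolding x_def using Dpos by (simp add: field_simps)
    also have "N - D = cos (tau \<rho>) - 1" unfolding N_def D_def by simp
    finally have nx: "N * x - s = s * (cos (tau \<rho>) - 1) / D" .
    have "\<bar>s * (cos (tau \<rho>) - 1)\<bar> \<le> 1 * 2"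
      unfolding abs_mult using s0 s1 cos_le_one[of "tau \<rho>"] cos_ge_minus_one[of "tau \<rho>"]
      by (intro mult_mono) auto
    hence "\<bar>N * x - s\<bar> \<le> 2 / D" unfolding nx using Dpos by (simp add: divide_right_mono)
    also have "\<dots> \<le> 2 / N" using ND N3 by (simp add: frac_le)
    finally have b2: "\<bar>N * x - s\<bar> \<le> 2 / N" .
    have "e \<rho> = (N * arctan x - N * x) + (N * x - s)" unfolding e_def using eq s_def by simp
    hence "\<bar>e \<rho>\<bar> \<le> 1/N + 2/N" using cb b2 by linarith
    thus ?thesis unfolding N_def by simp
  qed
  have e0: "e \<longlonglongrightarrow> 0"
  proof (rule Lim_null_comparison[OF _ lim1])
    show "\<forall>\<^sub>F \<rho> in sequentially. norm (e \<rho>) \<le> 3 / (2 * real \<rho> - 1)"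
      using ebound by (auto intro!: eventually_sequentiallyI[of 2])
  qed
  have t1: "tau \<longlonglongrightarrow> tau_inf"
  proof (rule LIMSEQ_I)
    fix r :: real assume r: "0 < r"
    define \<delta> where "\<delta> = min ((tau_inf + r) - sin (tau_inf + r) - (tau_inf - sin tau_inf))
                            ((tau_inf - sin tau_inf) - ((tau_inf - r) - sin (tau_inf - r)))"
    have d0: "\<delta> > 0" unfolding \<delta>_def using f_strict[of tau_inf "tau_inf + r"] f_strict[of "tau_inf - r" tau_inf] r
      by simp
    obtain M where M: "\<And>n. n \<ge> M \<Longrightarrow> norm (e n - 0) < \<delta>" using LIMSEQ_D[OF e0 d0] by blast
    show "\<exists>no. \<forall>n\<ge>no. norm (tau n - tau_inf) < r"
    proof (intro exI allI impI)
      fix n assume n: "n \<ge> M"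
      have en: "\<bar>e n\<bar> < \<delta>" using M[OF n] by simp
      have fe: "tau n - sin (tau n) - (tau_inf - sin tau_inf) = e n" unfolding e_def using tau_inf_eq by simp
      have "tau n < tau_inf + r"
      proof (rule ccontr)
        assume "\<not> ?thesis"
        hence "tau_inf + r \<le> tau n" by simp
        hence "(tau_inf + r) - sin (tau_inf + r) \<le> tau n - sin (tau n)"
          using f_strict[of "tau_inf + r" "tau n"] by (cases "tau_inf + r = tau n") auto
        thus False using en fe unfolding \<delta>_def by linarith
      qed
      moreover have "tau_inf - r < tau n"
      proof (rule ccontr)
        assume "\<not> ?thesis"
        hence "tau n \<le> tau_inf - r" by simp
        hence "tau n - sin (tau n) \<le> (tau_inf - r) - sin (tau_inf - r)"
          using f_strict[of "tau n" "tau_inf - r"] by (cases "tau_inf - r = tau n") auto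
        thus False using en fe unfolding \<delta>_def by linarith
      qed
      ultimately show "norm (tau n - tau_inf) < r" by simp
    qed
  qed
  have t2: "(\<lambda>\<rho>. 2 * tau \<rho> + (2 * tau \<rho> - gbar) * (1 / (2 * real \<rho> - 1))) \<longlonglongrightarrow> 2 * tau_inf + (2 * tau_inf - gbar) * 0"
    by (intro tendsto_intros t1 lim2)
  have t3: "(\<lambda>\<rho>. (4 * real \<rho> * tau \<rho> - gbar) / (2 * real \<rho> - 1)) \<longlonglongrightarrow> 2 * tau_inf"
  proof (rule Lim_transform_eventually[OF t2[simplified]])
    show "\<forall>\<^sub>F \<rho> in sequentially. 2 * tau \<rho> + (2 * tau \<rho> - gbar) / (2 * real \<rho> - 1) =
        (4 * real \<rho> * tau \<rho> - gbar) / (2 * real \<rho> - 1)"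
    proof (rule eventually_sequentiallyI[of 1])
      fix \<rho> :: nat assume "1 \<le> \<rho>"
      hence "2 * real \<rho> - 1 \<noteq> 0" by simp
      thus "2 * tau \<rho> + (2 * tau \<rho> - gbar) / (2 * real \<rho> - 1) =
        (4 * real \<rho> * tau \<rho> - gbar) / (2 * real \<rho> - 1)" by (simp add: field_simps)
    qed
  qed
  show ?thesis using t1 t3 by simp
qed

end
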